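(* Consider the Beverton–Holt equation $u(t+1)=\dfrac{\mu K(t)u(t)}{K(t)+(\mu-1)u(t)}$, $t\in\mathbb Z_+$, where $\mu>1$, $\tau\in\mathbb N$, and $K:\mathbb Z_+\to\mathbb R$ is asymptotically $\tau$-periodic with $\alpha\le K(t)\le\beta$ for all $t$, for some constants $0<\alpha\le\beta$. Then for every initial value $u\ge0$ the solution $\varphi(t,u,K)$ with $\varphi(0,u,K)=u$ is asymptotically $\tau$-periodic.
   Context: A sequence $K$ is asymptotically $\tau$-periodic if $K=P+R$ with $P(t+\tau)=P(t)$ for all $t\in\mathbb Z_+$ and $R(t)\to0$ as $t\to\infty$. A solution is asymptotically $\tau$-periodic if it differs from a $\tau$-periodic sequence by a sequence tending to $0$. *)

theory Defs
  imports Complex_Main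
begin

definition periodic_seq :: "nat \<Rightarrow> (nat \<Rightarrow> real) \<Rightarrow> bool" where
  "periodic_seq tau P \<longleftrightarrow> (\<forall>t. P (t + tau) = P t)"

definition asymp_periodic :: "nat \<Rightarrow> (nat \<Rightarrow> real) \<Rightarrow> bool" where
  "asymp_periodic tau K \<longleftrightarrow>
     (\<exists>P R. periodic_seq tau P \<and> (\<forall>t. K t = P t + R t) \<and> R \<longlonglongrightarrow> 0)"

primrec bh_sol :: "real \<Rightarrow> (nat \<Rightarrow> real) \<Rightarrow> real \<Rightarrow> nat \<Rightarrow> real" where
  "bh_sol mu K u 0 = u"
| "bh_sol mu K u (Suc t) =
     mu * K t * bh_sol mu K u t / (K t + (mu - 1) * bh_sol mu K u t)"

end

theory Submission
  imports Defs
begin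

primrec lin :: "real \<Rightarrow> real \<Rightarrow> (nat \<Rightarrow> real) \<Rightarrow> real \<Rightarrow> nat \<Rightarrow> real" where
  "lin a c P y0 0 = y0"
| "lin a c P y0 (Suc t) = a * lin a c P y0 t + c / P t"

lemma lin_affine: "lin a c P y0 n = a ^ n * y0 + lin a c P 0 n"
  by (induction n) (simp_all add: algebra_simps)

lemma lin_nonneg:
  assumes "0 \<le> a" "0 \<le> c" "\<And>t. P t > 0" "0 \<le> y0"
  shows "0 \<le> lin a c P y0 n"
proof (induction n)
  case (Suc n)
  have "0 \<le> a * lin a c P y0 n" using Suc assms by simp
  moreover have "0 \<le> c / P n" using assms(2) assms(3)[of n] by simp
  ultimately show ?case by simp
qed (use assms in simp)

lemma lin_periodic:
  assumes "\<And>t. P (t + tau) = P t" "lin a c P y0 tau = y0"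
  shows "lin a c P y0 (t + tau) = lin a c P y0 t"
  using assms by (induction t) simp_all

lemma contraction_lim:
  fixes e g :: "nat \<Rightarrow> real" and a :: real
  assumes a: "0 \<le> a" "a < 1" and rec: "\<And>t. \<bar>e (Suc t)\<bar> \<le> a * \<bar>e t\<bar> + \<bar>g t\<bar>"
    and g: "g \<longlonglongrightarrow> 0"
  shows "e \<longlonglongrightarrow> 0"
proof (rule LIMSEQ_I)
  fix r :: real assume r: "0 < r"
  define d where "d = r * (1 - a) / 2"
  have d: "d > 0" using r a by (simp add: d_def)
  from LIMSEQ_D[OF g d] obtain N where N: "\<And>n. n \<ge> N \<Longrightarrow> \<bar>g n\<bar> < d" by auto
  have bound: "\<bar>e (N + k)\<bar> \<le> a ^ k * \<bar>e N\<bar> + d / (1 - a)" for k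
  proof (induction k)
    case 0
    then show ?case using d a by simp
  next
    case (Suc k)
    have "\<bar>e (N + Suc k)\<bar> \<le> a * \<bar>e (N + k)\<bar> + \<bar>g (N + k)\<bar>" using rec[of "N + k"] by simp
    also have "\<dots> \<le> a * (a ^ k * \<bar>e N\<bar> + d / (1 - a)) + d"
      using Suc.IH a N[of "N+k"] by (intro add_mono mult_left_mono) auto
    also have "\<dots> = a ^ Suc k * \<bar>e N\<bar> + d / (1 - a)"
      using a by (simp add: field_simps)
    finally show ?case .
  qed
  have "(\<lambda>k. a ^ k * \<bar>e N\<bar>) \<longlonglongrightarrow> 0"
    using a by (intro tendsto_mult_left_zero LIMSEQ_power_zero) simp
  from LIMSEQ_D[OF this, of "r/2"] r obtain M where M: "\<And>k. k \<ge> M \<Longrightarrow> \<bar>a ^ k * \<bar>e N\<bar>\<bar> < r/2" by auto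
  show "\<exists>no. \<forall>n\<ge>no. norm (e n - 0) < r"
  proof (intro exI allI impI)
    fix n assume n: "n \<ge> N + M"
    then obtain k where k: "n = N + k" "k \<ge> M" by (metis add_le_imp_le_left le_add_diff_inverse le_add1 le_trans)
    have "d / (1 - a) = r / 2" using a by (simp add: d_def field_simps)
    moreover have "a ^ k * \<bar>e N\<bar> \<ge> 0" using a by simp
    ultimately show "norm (e n - 0) < r" using bound[of k] M[OF k(2)] k(1) by simp
  qed
qed

theorem mainTheorem20:
  fixes mu alpha beta u :: real and tau :: nat and K :: "nat \<Rightarrow> real"
  assumes "mu > 1" and "tau > 0"
    and "asymp_periodic tau K"
    and "0 < alpha" and "alpha \<le> beta"
    and "\<And>t. alpha \<le> K t \<and> K t \<le> beta"
    and "u \<ge> 0"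
  shows "asymp_periodic tau (bh_sol mu K u)"
proof (cases "u = 0")
  case True
  have "bh_sol mu K u t = 0" for t using True by (induction t) simp_all
  then show ?thesis unfolding asymp_periodic_def periodic_seq_def
    by (intro exI[of _ "\<lambda>_. 0"] exI[of _ "\<lambda>_. 0"]) auto
next
  case False
  have mu: "mu > 1" and tau: "tau > 0" and al: "0 < alpha" and Kb: "\<And>t. alpha \<le> K t" "\<And>t. K t \<le> beta"
    using assms by auto
  have upos: "u > 0" using False assms(7) by simp
  from assms(3) obtain P R where Pp: "\<And>t. P (t + tau) = P t" and KPR: "\<And>t. K t = P t + R t"
    and R: "R \<longlonglongrightarrow> 0" unfolding asymp_periodic_def periodic_seq_def by blast
  have Pn: "P (t + n * tau) = P t" for t n
  proof (induction n)
    case (Suc n)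
    have "P (t + Suc n * tau) = P ((t + n * tau) + tau)" by (simp add: algebra_simps)
    then show ?case using Pp Suc by simp
  qed simp
  have Pbounds: "alpha \<le> P t \<and> P t \<le> beta" for t
  proof -
    have sm: "strict_mono (\<lambda>n. t + n * tau)" using tau by (auto simp: strict_mono_def)
    have Rs: "(\<lambda>n. R (t + n * tau)) \<longlonglongrightarrow> 0"
      using LIMSEQ_subseq_LIMSEQ[OF R sm] by (simp add: comp_def)
    have eq: "P t = K (t + n * tau) - R (t + n * tau)" for n using KPR[of "t + n*tau"] Pn[of t n] by simp
    have l1: "(\<lambda>n. alpha - R (t + n * tau)) \<longlonglongrightarrow> alpha - 0" by (intro tendsto_intros Rs)
    have l2: "(\<lambda>n. beta - R (t + n * tau)) \<longlonglongrightarrow> beta - 0" by (intro tendsto_intros Rs)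
    have "alpha - 0 \<le> P t"
      by (rule tendsto_le[OF trivial_limit_sequentially tendsto_const l1])
         (intro always_eventually allI, use eq Kb in \<open>metis diff_right_mono\<close>)
    moreover have "P t \<le> beta - 0"
      by (rule tendsto_le[OF trivial_limit_sequentially l2 tendsto_const])
         (intro always_eventually allI, use eq Kb in \<open>metis diff_right_mono\<close>)
    ultimately show ?thesis by simp
  qed
  have Ppos: "P t > 0" for t using Pbounds[of t] al by linarith
  have Kpos: "K t > 0" for t using Kb(1)[of t] al by linarith
  define a where "a = 1 / mu"
  define c where "c = (mu - 1) / mu"
  have a: "0 \<le> a" "a < 1" using mu by (auto simp: a_def)
  have c: "c > 0" using mu by (simp add: c_def)
  define b where "b = bh_sol mu K u"
  have bpos: "b t > 0" for t
  proof (induction t)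
    case 0 then show ?case using upos by (simp add: b_def)
  next
    case (Suc t)
    have "K t + (mu - 1) * b t > 0" using Kpos[of t] Suc mu by (simp add: add_pos_nonneg)
    moreover have "mu * K t * b t > 0" using Kpos[of t] Suc mu by simp
    ultimately show ?case by (simp add: b_def)
  qed
  define x where "x t = 1 / b t" for t
  have xrec: "x (Suc t) = a * x t + c / K t" for t
  proof -
    have h: "K t + (mu - 1) * b t > 0" using Kpos[of t] bpos[of t] mu by (simp add: add_pos_nonneg)
    show ?thesis using h bpos[of t] Kpos[of t] mu
      unfolding x_def a_def c_def by (simp add: b_def field_simps)
  qed
  have xpos: "x t > 0" for t using bpos by (simp add: x_def)
  define m1 where "m1 = min (x 0) (c / beta)"
  have m1: "m1 > 0" using xpos c al assms(5) by (simp add: m1_def)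
  have xlow: "x t \<ge> m1" for t
  proof (cases t)
    case (Suc s)
    have "c / beta \<le> c / K s" using Kb c Kpos[of s] by (simp add: frac_le)
    also have "\<dots> \<le> x (Suc s)" using xrec[of s] a xpos[of s] by simp
    finally show ?thesis using Suc by (simp add: m1_def)
  qed (simp add: m1_def)
  define L where "L = lin a c P 0 tau"
  define y0 where "y0 = L / (1 - a ^ tau)"
  define y where "y = lin a c P y0"
  have apow: "a ^ tau < 1" using a tau by (simp add: power_less_one_iff)
  have L0: "L \<ge> 0" unfolding L_def using a c Ppos by (intro lin_nonneg) auto
  have y0: "y0 \<ge> 0" using L0 apow by (simp add: y0_def)
  have ytau: "lin a c P y0 tau = y0"
    using lin_affine[of a c P y0 tau] apow by (simp add: y0_def L_def[symmetric] field_simps)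
  have yper: "y (t + tau) = y t" for t unfolding y_def by (rule lin_periodic[OF Pp ytau])
  have ynn: "y t \<ge> 0" for t unfolding y_def using a c Ppos y0 by (intro lin_nonneg) auto
  define m2 where "m2 = c / beta"
  have m2: "m2 > 0" using c al assms(5) by (simp add: m2_def)
  have ylow: "y t \<ge> m2" for t
  proof -
    obtain s where s: "t + tau = Suc s" using tau by (cases "t + tau") auto
    have "c / beta \<le> c / P s" using Pbounds[of s] c Ppos[of s] by (simp add: frac_le)
    also have "\<dots> \<le> y (Suc s)" using ynn[of s] a by (simp add: y_def)
    finally show ?thesis using yper[of t] s by (simp add: m2_def)
  qed
  define g where "g t = c * (1 / K t - 1 / P t)" for t
  have g: "g \<longlonglongrightarrow> 0"
  proof (rule tendsto_0_le[OF R, where K = "c / alpha^2"])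
    show "\<forall>\<^sub>F t in sequentially. norm (g t) \<le> norm (R t) * (c / alpha\<^sup>2)"
    proof (intro always_eventually allI)
      fix t
      have "g t = - c * R t / (K t * P t)"
        using Kpos[of t] Ppos[of t] KPR[of t] by (simp add: g_def field_simps)
      hence "norm (g t) = c * \<bar>R t\<bar> / (K t * P t)"
        using c Kpos[of t] Ppos[of t] by (simp add: abs_mult)
      also have "\<dots> \<le> c * \<bar>R t\<bar> / (alpha * alpha)"
        using Kb(1)[of t] Pbounds[of t] al c
        by (intro divide_left_mono mult_mono) auto
      finally show "norm (g t) \<le> norm (R t) * (c / alpha\<^sup>2)"
        by (simp add: power2_eq_square mult.commute)
    qed
  qed
  define e where "e t = x t - y t" for t
  have erec: "\<bar>e (Suc t)\<bar> \<le> a * \<bar>e t\<bar> + \<bar>g t\<bar>" for t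
  proof -
    have "e (Suc t) = a * e t + g t"
      by (simp add: e_def xrec y_def g_def algebra_simps diff_divide_distrib)
    then show ?thesis using a by (simp add: abs_mult abs_triangle_ineq[THEN order_trans])
  qed
  have e: "e \<longlonglongrightarrow> 0" by (rule contraction_lim[OF a erec g])
  have Rlim: "(\<lambda>t. b t - 1 / y t) \<longlonglongrightarrow> 0"
  proof (rule tendsto_0_le[OF e, where K = "1 / (m1 * m2)"])
    show "\<forall>\<^sub>F t in sequentially. norm (b t - 1 / y t) \<le> norm (e t) * (1 / (m1 * m2))"
    proof (intro always_eventually allI)
      fix t
      have xp: "x t > 0" and yp: "y t > 0" using xpos[of t] ylow[of t] m2 by auto
      have "b t - 1 / y t = - e t / (x t * y t)"
        using xp yp bpos[of t] by (simp add: x_def e_def field_simps)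
      hence "norm (b t - 1 / y t) = \<bar>e t\<bar> / (x t * y t)" using xp yp by (simp add: abs_mult)
      also have "\<dots> \<le> \<bar>e t\<bar> / (m1 * m2)"
        using xlow[of t] ylow[of t] m1 m2 by (intro divide_left_mono mult_mono mult_pos_pos) auto
      finally show "norm (b t - 1 / y t) \<le> norm (e t) * (1 / (m1 * m2))" by simp
    qed
  qed
  show ?thesis unfolding asymp_periodic_def periodic_seq_def b_def[symmetric]
    by (intro exI[of _ "\<lambda>t. 1 / y t"] exI[of _ "\<lambda>t. b t - 1 / y t"]) (use yper Rlim in auto)
qed

end
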